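(* In the setting below, suppose $0<\eta\le\frac{1}{L(K+1)}$, let $a\ge 2$ be an integer and set $\epsilon_i=2\eta L(\eta KL)^{i-1}$ for $i\ge1$. Then for every integer $k\ge aK+1$, \[ \Big(1+\eta\frac{\mu}{8}\Big)F_{k+1}\le\Big(1-\sum_{i=1}^{a-1}\epsilon_i\Big)F_k+\sum_{i=1}^{a-1}\epsilon_i F_{k-iK}+\eta^2\frac{KL}{2}\epsilon_{a-1}\sum_{j=k-aK}^{k-1}\|d_j\|^2 . \]
   Context: Let $m,n\ge 1$ be integers and $\|\cdot\|$ the Euclidean norm on $\mathbb{R}^n$. For $i=1,\dots,m$, let $f_i:\mathbb{R}^n\to\mathbb{R}$ be continuously differentiable with $\|\nabla f_i(x)-\nabla f_i(y)\|\le L_i\|x-y\|$ for all $x,y$, where $L_i\ge 0$ (the $f_i$ are not assumed convex). Let $f=\frac1m\sum_{i=1}^m f_i$ and $L=\frac1m\sum_{i=1}^m L_i$. Assume $f$ is $\mu$-strongly convex for some $\mu>0$ (i.e. $x\mapsto f(x)-\frac{\mu}{2}\|x\|^2$ is convex). Let $r:\mathbb{R}^n\to(-\infty,\infty]$ be proper, closed and convex, let $F=f+r$, and let $x^*$ be the unique minimizer of $F$. For $\eta>0$ define $\mathrm{prox}_r^\eta(y)=\arg\min_{x\in\mathbb{R}^n}\{\frac12\|x-y\|^2+\eta r(x)\}$. PIAG method: fix an integer $K\ge 0$, a step size $\eta>0$ and $x_0\in\mathbb{R}^n$; for each $k\ge0$ and each $i$ let $\tau_{i,k}$ be any (deterministically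 chosen) integer with $\max(k-K,0)\le\tau_{i,k}\le k$; set $g_k=\frac1m\sum_{i=1}^m\nabla f_i(x_{\tau_{i,k}})$ and $x_{k+1}=\mathrm{prox}_r^\eta(x_k-\eta g_k)$. Define $d_k=(x_{k+1}-x_k)/\eta$ and $F_k=F(x_k)-F(x^* )$. *)

theory Defs
  imports "HOL-Analysis.Analysis" "HOL-Library.Extended_Real"
begin

definition epi :: "('a \<Rightarrow> ereal) \<Rightarrow> ('a \<times> real) set" where
  "epi r = {(x, t). r x \<le> ereal t}"

definition proper_closed_convex :: "('a::real_normed_vector \<Rightarrow> ereal) \<Rightarrow> bool" where
  "proper_closed_convex r \<longleftrightarrow>
     (\<forall>x. r x \<noteq> -\<infinity>) \<and> (\<exists>x. r x \<noteq> \<infinity>) \<and> convex (epi r) \<and> closed (epi r)"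

definition is_prox :: "('a::real_normed_vector \<Rightarrow> ereal) \<Rightarrow> real \<Rightarrow> 'a \<Rightarrow> 'a \<Rightarrow> bool" where
  "is_prox r \<eta> y z \<longleftrightarrow>
     (\<forall>w. ereal ((norm (z - y))\<^sup>2 / 2) + ereal \<eta> * r z \<le> ereal ((norm (w - y))\<^sup>2 / 2) + ereal \<eta> * r w)"

end

theory Submission
  imports Defs
begin


lemma norm_add_scale_sq:
  fixes a b :: "'a::real_inner"
  shows "(norm (a + t *\<^sub>R b))\<^sup>2 = (norm a)\<^sup>2 + 2 * t * (a \<bullet> b) + t\<^sup>2 * (norm b)\<^sup>2"
  unfolding power2_norm_eq_inner by (simp add: inner_add_left inner_add_right inner_commute algebra_simps power2_eq_square)

lemma prox_ineq:
  fixes r :: "'a::real_inner \<Rightarrow> ereal"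
  assumes pcc: "proper_closed_convex r" and px: "is_prox r \<eta> y z" and eta: "\<eta> > 0"
    and rz: "r z = ereal Rz" and rw: "r w = ereal Rw"
  shows "\<eta> * (Rw - Rz) + (z - y) \<bullet> (w - z) \<ge> 0"
proof -
  define P where "P = (z - y) \<bullet> (w - z)"
  define c where "c = \<eta> * (Rw - Rz) + P"
  define D where "D = (norm (w - z))\<^sup>2"
  have key: "0 \<le> c + t / 2 * D" if t0: "0 < t" and t1: "t \<le> 1" for t
  proof -
    define wt where "wt = (1 - t) *\<^sub>R z + t *\<^sub>R w"
    have cv: "convex (epi r)" using pcc unfolding proper_closed_convex_def by auto
    have "(z, Rz) \<in> epi r" "(w, Rw) \<in> epi r" using rz rw unfolding epi_def by auto
    from convexD[OF cv this, of "1 - t" t] t0 t1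
    have "(wt, (1 - t) * Rz + t * Rw) \<in> epi r" unfolding wt_def by (simp add: scaleR_prod_def)
    hence rwt: "r wt \<le> ereal ((1 - t) * Rz + t * Rw)" unfolding epi_def by auto
    have "ereal ((norm (z - y))\<^sup>2 / 2) + ereal \<eta> * r z \<le> ereal ((norm (wt - y))\<^sup>2 / 2) + ereal \<eta> * r wt"
      using px unfolding is_prox_def by blast
    also have "\<dots> \<le> ereal ((norm (wt - y))\<^sup>2 / 2) + ereal \<eta> * ereal ((1 - t) * Rz + t * Rw)"
      using rwt eta by (intro add_left_mono ereal_mult_left_mono) auto
    finally have "(norm (z - y))\<^sup>2 / 2 + \<eta> * Rz \<le> (norm (wt - y))\<^sup>2 / 2 + \<eta> * ((1 - t) * Rz + t * Rw)"
      using rz by simp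
    moreover have eqw: "wt - y = (z - y) + t *\<^sub>R (w - z)" unfolding wt_def by (simp add: algebra_simps)
    have "(norm (wt - y))\<^sup>2 = (norm (z - y))\<^sup>2 + 2 * t * P + t\<^sup>2 * D"
      unfolding D_def P_def eqw by (rule norm_add_scale_sq)
    ultimately have "(norm (z - y))\<^sup>2 / 2 + \<eta> * Rz \<le> ((norm (z - y))\<^sup>2 + 2 * t * P + t\<^sup>2 * D) / 2 + \<eta> * ((1 - t) * Rz + t * Rw)"
      by simp
    hence "0 \<le> t * c + t\<^sup>2 / 2 * D" unfolding c_def by (simp add: algebra_simps add_divide_distrib)
    hence "0 \<le> t * (c + t / 2 * D)" by (simp add: algebra_simps power2_eq_square)
    thus ?thesis using t0 by (simp add: zero_le_mult_iff)
  qed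
  have D0: "D \<ge> 0" unfolding D_def by simp
  show ?thesis
  proof (rule ccontr)
    assume "\<not> ?thesis" hence cn: "c < 0" unfolding c_def P_def by simp
    define t where "t = min 1 (- c / (D + 1))"
    have t0: "0 < t" unfolding t_def using cn D0 by (simp add: field_simps)
    have "t / 2 * D \<le> (- c / (D + 1)) / 2 * D" unfolding t_def using D0 by (intro mult_right_mono divide_right_mono) auto
    also have "\<dots> < - c" using cn D0 by (simp add: field_simps) (smt (verit) mult_nonneg_nonpos)
    finally show False using key[OF t0] unfolding t_def by auto
  qed
qed





lemma deriv_line:
  fixes \<phi> :: "'a::real_inner \<Rightarrow> real"
  assumes der: "\<And>y. (\<phi> has_derivative (\<lambda>h. G y \<bullet> h)) (at y)"
  shows "((\<lambda>t. \<phi> (x + t *\<^sub>R v)) has_field_derivative (G (x + t *\<^sub>R v) \<bullet> v)) (at t)"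
proof -
  have "((\<lambda>t. x + t *\<^sub>R v) has_derivative (\<lambda>s. s *\<^sub>R v)) (at t)"
    by (auto intro!: derivative_eq_intros)
  from has_derivative_compose[OF this der]
  have "((\<lambda>t. \<phi> (x + t *\<^sub>R v)) has_derivative (\<lambda>s. G (x + t *\<^sub>R v) \<bullet> (s *\<^sub>R v))) (at t)" .
  moreover have "(\<lambda>s. G (x + t *\<^sub>R v) \<bullet> (s *\<^sub>R v)) = (*) (G (x + t *\<^sub>R v) \<bullet> v)"
    by (auto simp: mult.commute)
  ultimately show ?thesis by (simp add: has_field_derivative_def)
qed

lemma descent:
  fixes \<phi> :: "'a::real_inner \<Rightarrow> real"
  assumes der: "\<And>y. (\<phi> has_derivative (\<lambda>h. G y \<bullet> h)) (at y)"
    and lip: "\<And>y z. norm (G y - G z) \<le> M * norm (y - z)"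
  shows "\<phi> y \<le> \<phi> x + G x \<bullet> (y - x) + M / 2 * (norm (y - x))\<^sup>2"
proof -
  define v where "v = y - x"
  define h where "h = (\<lambda>t. \<phi> (x + t *\<^sub>R v) - t * (G x \<bullet> v) - M / 2 * t\<^sup>2 * (norm v)\<^sup>2)"
  have dh: "DERIV h t :> (G (x + t *\<^sub>R v) \<bullet> v - G x \<bullet> v - M * t * (norm v)\<^sup>2)" for t
    unfolding h_def
    by (rule derivative_eq_intros deriv_line[OF der] | simp)+
  have "h 1 \<le> h 0"
  proof (rule DERIV_nonpos_imp_nonincreasing[of 0 1 h])
    fix t :: real assume t: "0 \<le> t" "t \<le> 1"
    have "G (x + t *\<^sub>R v) \<bullet> v - G x \<bullet> v = (G (x + t *\<^sub>R v) - G x) \<bullet> v" by (simp add: inner_diff_left)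
    also have "\<dots> \<le> norm (G (x + t *\<^sub>R v) - G x) * norm v" by (rule norm_cauchy_schwarz)
    also have "\<dots> \<le> (M * norm (t *\<^sub>R v)) * norm v" using lip[of "x + t *\<^sub>R v" x] by (intro mult_right_mono) auto
    also have "\<dots> = M * t * (norm v)\<^sup>2" using t by (simp add: power2_eq_square)
    finally have "G (x + t *\<^sub>R v) \<bullet> v - G x \<bullet> v - M * t * (norm v)\<^sup>2 \<le> 0" by simp
    with dh[of t] show "\<exists>y. DERIV h t :> y \<and> y \<le> 0" by blast
  qed simp
  thus ?thesis unfolding h_def v_def by simp
qed

lemma strong_cvx:
  fixes \<phi> :: "'a::real_inner \<Rightarrow> real"
  assumes der: "\<And>y. (\<phi> has_derivative (\<lambda>h. G y \<bullet> h)) (at y)"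
    and cvx: "convex_on UNIV (\<lambda>y. \<phi> y - \<mu> / 2 * (norm y)\<^sup>2)"
  shows "\<phi> x + G x \<bullet> (y - x) + \<mu> / 2 * (norm (y - x))\<^sup>2 \<le> \<phi> y"
proof -
  define v where "v = y - x"
  define \<psi> where "\<psi> = (\<lambda>t. \<phi> (x + t *\<^sub>R v) - \<mu> / 2 * ((norm x)\<^sup>2 + 2 * t * (x \<bullet> v) + t\<^sup>2 * (norm v)\<^sup>2))"
  have cv: "convex_on UNIV \<psi>"
  proof (rule convex_onI)
    fix t1 t2 u :: real assume u: "0 < u" "u < 1"
    have e: "x + ((1 - u) *\<^sub>R t1 + u *\<^sub>R t2) *\<^sub>R v = (1 - u) *\<^sub>R (x + t1 *\<^sub>R v) + u *\<^sub>R (x + t2 *\<^sub>R v)"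
      by (simp add: algebra_simps)
    have "\<psi> ((1 - u) *\<^sub>R t1 + u *\<^sub>R t2) = (\<lambda>y. \<phi> y - \<mu> / 2 * (norm y)\<^sup>2) ((1 - u) *\<^sub>R (x + t1 *\<^sub>R v) + u *\<^sub>R (x + t2 *\<^sub>R v))"
      unfolding \<psi>_def e[symmetric] norm_add_scale_sq by simp
    also have "\<dots> \<le> (1 - u) * (\<lambda>y. \<phi> y - \<mu> / 2 * (norm y)\<^sup>2) (x + t1 *\<^sub>R v) + u * (\<lambda>y. \<phi> y - \<mu> / 2 * (norm y)\<^sup>2) (x + t2 *\<^sub>R v)"
      by (rule convex_onD[OF cvx]) (use u in auto)
    also have "\<dots> = (1 - u) * \<psi> t1 + u * \<psi> t2" unfolding \<psi>_def norm_add_scale_sq by simp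
    finally show "\<psi> ((1 - u) *\<^sub>R t1 + u *\<^sub>R t2) \<le> (1 - u) * \<psi> t1 + u * \<psi> t2" .
  qed simp
  have d: "(\<psi> has_field_derivative (G x \<bullet> v - \<mu> * (x \<bullet> v))) (at 0 within UNIV)"
    unfolding \<psi>_def
    by (rule derivative_eq_intros deriv_line[OF der] | simp add: inner_commute)+
  from convex_on_imp_above_tangent[OF cv _ _ _ d, of 1]
  have "G x \<bullet> v - \<mu> * (x \<bullet> v) \<le> \<psi> 1 - \<psi> 0" by simp
  thus ?thesis unfolding \<psi>_def using v_def by (simp add: algebra_simps)
qed





lemma two_mul_le: "2 * (a::real) * b \<le> a\<^sup>2 + b\<^sup>2"
  using zero_le_power2[of "a - b"] by (simp add: power2_diff)

lemma mul_le_half: "(a::real) * b \<le> (a\<^sup>2 + b\<^sup>2) / 2"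
  using two_mul_le[of a b] by simp

lemma cs_sum:
  fixes a :: "nat \<Rightarrow> real"
  assumes "finite A"
  shows "(\<Sum>l\<in>A. a l)\<^sup>2 \<le> real (card A) * (\<Sum>l\<in>A. (a l)\<^sup>2)"
proof -
  have "(\<Sum>l\<in>A. a l)\<^sup>2 = (\<Sum>l\<in>A. \<Sum>l'\<in>A. a l * a l')"
    by (simp add: power2_eq_square sum_product)
  also have "\<dots> \<le> (\<Sum>l\<in>A. \<Sum>l'\<in>A. ((a l)\<^sup>2 + (a l')\<^sup>2) / 2)"
    by (intro sum_mono mul_le_half)
  also have "\<dots> = (\<Sum>l\<in>A. (real (card A) * (a l)\<^sup>2 + (\<Sum>l'\<in>A. (a l')\<^sup>2)) / 2)"
    by (simp add: sum.distrib sum_divide_distrib[symmetric])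
  also have "\<dots> = (\<Sum>l\<in>A. real (card A) * (a l)\<^sup>2) / 2 + (\<Sum>l\<in>A. (\<Sum>l'\<in>A. (a l')\<^sup>2)) / 2"
    unfolding sum_divide_distrib[symmetric] sum.distrib by (rule add_divide_distrib)
  also have "\<dots> = real (card A) * (\<Sum>l\<in>A. (a l)\<^sup>2)"
    by (simp add: sum_distrib_left[symmetric])
  finally show ?thesis .
qed

lemma dsum:
  fixes D :: "nat \<Rightarrow> real"
  assumes D: "\<And>l. D l \<ge> 0" and p: "K \<le> p"
  shows "(\<Sum>j\<in>{p..<k}. \<Sum>l\<in>{j-K..<j}. D l) \<le> real K * (\<Sum>l\<in>{p-K..<k}. D l)"
proof -
  have "(\<Sum>j\<in>{p..<k}. \<Sum>l\<in>{j-K..<j}. D l) = (\<Sum>j\<in>{p..<k}. \<Sum>t\<in>{0..<K}. D (j - K + t))"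
  proof (rule sum.cong[OF refl])
    fix j assume "j \<in> {p..<k}"
    hence "K \<le> j" using p by auto
    thus "(\<Sum>l\<in>{j-K..<j}. D l) = (\<Sum>t\<in>{0..<K}. D (j - K + t))"
      using sum.atLeastLessThan_shift_0[of D "j - K" j] by (simp add: comp_def)
  qed
  also have "\<dots> = (\<Sum>t\<in>{0..<K}. \<Sum>j\<in>{p..<k}. D (j - K + t))" by (rule sum.swap)
  also have "\<dots> \<le> (\<Sum>t\<in>{0..<K}. \<Sum>l\<in>{p-K..<k}. D l)"
  proof (rule sum_mono)
    fix t assume t: "t \<in> {0..<K}"
    have inj: "inj_on (\<lambda>j. j - K + t) {p..<k}" using p by (auto simp: inj_on_def)
    have "(\<Sum>j\<in>{p..<k}. D (j - K + t)) = sum D ((\<lambda>j. j - K + t) ` {p..<k})"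
      by (simp add: sum.reindex[OF inj] comp_def)
    also have "\<dots> \<le> (\<Sum>l\<in>{p-K..<k}. D l)"
      by (rule sum_mono2) (use t p D in auto)
    finally show "(\<Sum>j\<in>{p..<k}. D (j - K + t)) \<le> (\<Sum>l\<in>{p-K..<k}. D l)" .
  qed
  also have "\<dots> = real K * (\<Sum>l\<in>{p-K..<k}. D l)" by simp
  finally show ?thesis .
qed

lemma combine:
  fixes e d u :: "'a::real_inner"
  assumes A: "N \<le> Fk - \<eta> * (norm d)\<^sup>2 + \<eta> * (e \<bullet> d) + L * \<eta>\<^sup>2 / 2 * (norm d)\<^sup>2"
    and B: "N \<le> (e - d) \<bullet> (u + \<eta> *\<^sub>R d) - \<mu> / 2 * (norm u)\<^sup>2 + L * \<eta>\<^sup>2 / 2 * (norm d)\<^sup>2"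
    and eta: "\<eta> > 0" and mu: "\<mu> > 0" and etaL: "\<eta> * L \<le> 1" and etamu: "\<eta> * \<mu> \<le> 1"
  shows "(1 + \<eta> * \<mu> / 8) * N \<le> Fk + \<eta> * (norm e)\<^sup>2"
proof -
  define s where "s = \<eta> * \<mu> / 8"
  define D where "D = (norm d)\<^sup>2"
  define E where "E = (norm e)\<^sup>2"
  define U where "U = (norm u)\<^sup>2"
  define Q where "Q = (norm (e - d))\<^sup>2"
  define p where "p = (e - d) \<bullet> u"
  define c where "c = e \<bullet> d"
  define X where "X = - D + c + L * \<eta> / 2 * D"
  have s0: "0 \<le> s" and s1: "s \<le> 1/8" using eta mu etamu unfolding s_def by auto
  have D0: "D \<ge> 0" and E0: "E \<ge> 0" unfolding D_def E_def by auto
  have A': "N \<le> Fk + \<eta> * X" using A unfolding X_def D_def c_def by (simp add: algebra_simps power2_eq_square)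
  have "(e - d) \<bullet> (u + \<eta> *\<^sub>R d) = p + \<eta> * c - \<eta> * D"
    unfolding p_def c_def D_def by (simp add: inner_add_right inner_diff_left power2_norm_eq_inner right_diff_distrib)
  hence B': "N \<le> p - \<mu> / 2 * U + \<eta> * X" using B unfolding X_def D_def U_def by (simp add: algebra_simps power2_eq_square)
  have "(1 + s) * N = N + s * N" by (simp add: algebra_simps)
  also have "\<dots> \<le> (Fk + \<eta> * X) + s * (p - \<mu> / 2 * U + \<eta> * X)"
    using A' mult_left_mono[OF B' s0] by linarith
  finally have step1: "(1 + s) * N \<le> Fk + (1 + s) * \<eta> * X + s * (p - \<mu> / 2 * U)" by (simp add: algebra_simps)
  have q1: "0 \<le> Q - 2 * \<mu> * p + \<mu>\<^sup>2 * U"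
  proof -
    have "(norm ((e - d) + (- \<mu>) *\<^sub>R u))\<^sup>2 = Q - 2 * \<mu> * p + \<mu>\<^sup>2 * U"
      unfolding norm_add_scale_sq Q_def p_def U_def by simp
    thus ?thesis by (metis zero_le_power2)
  qed
  have F1: "s * (p - \<mu> / 2 * U) \<le> \<eta> / 16 * Q"
  proof -
    have "0 \<le> \<eta> / 16 * (Q - 2 * \<mu> * p + \<mu>\<^sup>2 * U)" using q1 eta by simp
    thus ?thesis unfolding s_def by (simp add: algebra_simps power2_eq_square)
  qed
  have F2: "Q \<le> 2 * E + 2 * D"
  proof -
    have "(norm (e + (-1) *\<^sub>R d))\<^sup>2 = E - 2 * c + D" unfolding norm_add_scale_sq E_def c_def D_def by simp
    moreover have "(norm (e + 1 *\<^sub>R d))\<^sup>2 = E + 2 * c + D" unfolding norm_add_scale_sq E_def c_def D_def by simp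
    moreover have "(norm (e + 1 *\<^sub>R d))\<^sup>2 \<ge> 0" by simp
    ultimately show ?thesis unfolding Q_def by simp
  qed
  have F3: "c \<le> 3/8 * D + 2/3 * E"
  proof -
    have "(norm (e + (-(3/4)) *\<^sub>R d))\<^sup>2 = E - 3/2 * c + 9/16 * D" unfolding norm_add_scale_sq E_def c_def D_def
      by (simp add: power2_eq_square)
    moreover have "(norm (e + (-(3/4)) *\<^sub>R d))\<^sup>2 \<ge> 0" by simp
    ultimately show ?thesis by simp
  qed
  have LD: "L * \<eta> * D \<le> D" using mult_right_mono[OF etaL D0] by (simp add: mult.commute)
  have X1: "X \<le> - D / 8 + 2 / 3 * E" unfolding X_def using LD F3 by simp
  have X2: "(1 + s) * \<eta> * X \<le> (1 + s) * \<eta> * (- D / 8 + 2 / 3 * E)"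
    using mult_left_mono[OF X1, of "(1 + s) * \<eta>"] s0 eta by simp
  have Q2: "\<eta> / 16 * Q \<le> \<eta> / 8 * (E + D)" using mult_left_mono[OF F2, of "\<eta> / 16"] eta by simp
  have P1: "0 \<le> \<eta> * s * D" using eta s0 D0 by simp
  have P2: "\<eta> * s * E \<le> \<eta> * E / 8" using mult_left_mono[OF s1, of "\<eta> * E"] eta E0 by (simp add: mult.commute mult.left_commute)
  have P3: "0 \<le> \<eta> * E" using eta E0 by simp
  have "(1 + s) * N \<le> Fk + \<eta> * E"
  proof -
    have e1: "(1 + s) * \<eta> * (- D / 8 + 2 / 3 * E) = - (\<eta> * D) / 8 - (\<eta> * s * D) / 8 + 2/3 * (\<eta> * E) + 2/3 * (\<eta> * s * E)"
      by (simp add: field_simps)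
    have e2: "\<eta> / 8 * (E + D) = (\<eta> * E) / 8 + (\<eta> * D) / 8" by (simp add: algebra_simps)
    show ?thesis using step1 X2 F1 Q2 P1 P2 P3 e1 e2 by linarith
  qed
  thus ?thesis unfolding s_def E_def .
qed


theorem theorem1:
  fixes m :: nat and fi :: "nat \<Rightarrow> 'a::euclidean_space \<Rightarrow> real"
    and grad :: "nat \<Rightarrow> 'a \<Rightarrow> 'a" and Li :: "nat \<Rightarrow> real"
    and \<mu> :: real and r :: "'a \<Rightarrow> ereal" and xstar :: 'a
    and K :: nat and \<eta> :: real and x :: "nat \<Rightarrow> 'a" and \<tau> :: "nat \<Rightarrow> nat \<Rightarrow> nat"
    and a :: nat and k :: nat
  defines "f \<equiv> \<lambda>y. (1 / real m) * (\<Sum>i\<in>{1..m}. fi i y)"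
    and "L \<equiv> (1 / real m) * (\<Sum>i\<in>{1..m}. Li i)"
  defines "F \<equiv> \<lambda>y. ereal (f y) + r y"
  defines "Fk \<equiv> \<lambda>j. real_of_ereal (F (x j) - F xstar)"
    and "d \<equiv> \<lambda>j. (1 / \<eta>) *\<^sub>R (x (Suc j) - x j)"
    and "g \<equiv> \<lambda>j. (1 / real m) *\<^sub>R (\<Sum>i\<in>{1..m}. grad i (x (\<tau> i j)))"
    and "\<epsilon> \<equiv> \<lambda>i::nat. 2 * \<eta> * L * (\<eta> * real K * L) ^ (i - 1)"
  assumes m_pos: "m \<ge> 1"
    and deriv: "\<And>i y. i \<in> {1..m} \<Longrightarrow> (fi i has_derivative (\<lambda>h. grad i y \<bullet> h)) (at y)"
    and grad_cont: "\<And>i. i \<in> {1..m} \<Longrightarrow> continuous_on UNIV (grad i)"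
    and Li_nonneg: "\<And>i. i \<in> {1..m} \<Longrightarrow> Li i \<ge> 0"
    and lipschitz: "\<And>i y z. i \<in> {1..m} \<Longrightarrow> norm (grad i y - grad i z) \<le> Li i * norm (y - z)"
    and mu_pos: "\<mu> > 0"
    and strongly_convex: "convex_on UNIV (\<lambda>y. f y - \<mu> / 2 * (norm y)\<^sup>2)"
    and r_pcc: "proper_closed_convex r"
    and xstar_min: "\<And>z. F xstar \<le> F z"
    and tau_bounds: "\<And>i j. i \<in> {1..m} \<Longrightarrow> j - K \<le> \<tau> i j \<and> \<tau> i j \<le> j"
    and iter: "\<And>j. is_prox r \<eta> (x j - \<eta> *\<^sub>R g j) (x (Suc j))"
    and eta_pos: "\<eta> > 0"
    and eta_le: "\<eta> * L * (real K + 1) \<le> 1"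
    and a_ge: "a \<ge> 2"
    and k_ge: "k \<ge> a * K + 1"
  shows "(1 + \<eta> * \<mu> / 8) * Fk (Suc k)
           \<le> (1 - (\<Sum>i=1..a-1. \<epsilon> i)) * Fk k + (\<Sum>i=1..a-1. \<epsilon> i * Fk (k - i * K))
             + \<eta>\<^sup>2 * (real K * L / 2) * \<epsilon> (a - 1) * (\<Sum>j=k - a * K..k - 1. (norm (d j))\<^sup>2)"
proof -
  have m0: "real m > 0" using m_pos by simp
  define G where "G = (\<lambda>y. (1 / real m) *\<^sub>R (\<Sum>i\<in>{1..m}. grad i y))"
  have fder: "(f has_derivative (\<lambda>h. G y \<bullet> h)) (at y)" for y
  proof -
    have "((\<lambda>y. \<Sum>i\<in>{1..m}. fi i y) has_derivative (\<lambda>h. \<Sum>i\<in>{1..m}. grad i y \<bullet> h)) (at y)"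
      by (rule has_derivative_sum) (use deriv in auto)
    hence "((\<lambda>y. (1 / real m) * (\<Sum>i\<in>{1..m}. fi i y)) has_derivative (\<lambda>h. (1 / real m) * (\<Sum>i\<in>{1..m}. grad i y \<bullet> h))) (at y)"
      by (rule has_derivative_mult_right)
    moreover have "(\<lambda>h. (1 / real m) * (\<Sum>i\<in>{1..m}. grad i y \<bullet> h)) = (\<lambda>h. G y \<bullet> h)"
      by (auto simp: G_def inner_sum_left)
    ultimately show ?thesis unfolding f_def by simp
  qed
  have Glip: "norm (G y - G z) \<le> L * norm (y - z)" for y z
  proof -
    have "G y - G z = (1 / real m) *\<^sub>R (\<Sum>i\<in>{1..m}. grad i y - grad i z)"
      by (simp add: G_def sum_subtractf scaleR_diff_right)
    hence "norm (G y - G z) = (1 / real m) * norm (\<Sum>i\<in>{1..m}. grad i y - grad i z)" using m0 by simp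
    also have "\<dots> \<le> (1 / real m) * (\<Sum>i\<in>{1..m}. Li i * norm (y - z))"
      by (intro mult_left_mono order_trans[OF norm_sum sum_mono] lipschitz) auto
    also have "\<dots> = L * norm (y - z)" by (simp add: L_def sum_distrib_right)
    finally show ?thesis .
  qed
  have L0: "L \<ge> 0"
  proof -
    have "sum Li {1..m} \<ge> 0" using Li_nonneg by (intro sum_nonneg) auto
    thus ?thesis unfolding L_def by simp
  qed
  have desc: "f y \<le> f z + G z \<bullet> (y - z) + L / 2 * (norm (y - z))\<^sup>2" for y z
    by (rule descent[OF fder Glip])
  have scvx: "f z + G z \<bullet> (y - z) + \<mu> / 2 * (norm (y - z))\<^sup>2 \<le> f y" for y z
    by (rule strong_cvx[OF fder strongly_convex])
  have muL: "\<mu> \<le> L"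
  proof -
    obtain b :: 'a where b: "b \<in> Basis" using nonempty_Basis by blast
    have nb: "norm b = 1" using b by simp
    from scvx[where y=b and z=0] desc[of b 0] have "\<mu> / 2 * (norm b)\<^sup>2 \<le> L / 2 * (norm b)\<^sup>2" by simp
    thus ?thesis using nb by simp
  qed
  have etaL1: "\<eta> * L \<le> 1"
  proof -
    have "\<eta> * L * 1 \<le> \<eta> * L * (real K + 1)" using eta_pos L0 by (intro mult_left_mono) auto
    thus ?thesis using eta_le by simp
  qed
  have etaLK: "\<eta> * L * real K \<le> 1"
  proof -
    have "\<eta> * L * real K \<le> \<eta> * L * (real K + 1)" using eta_pos L0 by (intro mult_left_mono) auto
    thus ?thesis using eta_le by simp
  qed
  have "\<eta> * \<mu> \<le> \<eta> * L" using muL eta_pos by (simp add: mult_left_mono)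
  hence etamu: "\<eta> * \<mu> \<le> 1" using etaL1 by linarith
  obtain z0 where z0: "r z0 \<noteq> \<infinity>" using r_pcc unfolding proper_closed_convex_def by auto
  have rnm: "r y \<noteq> -\<infinity>" for y using r_pcc unfolding proper_closed_convex_def by auto
  define R where "R = (\<lambda>y. real_of_ereal (r y))"
  have rfin: "r (x (Suc j)) = ereal (R (x (Suc j)))" for j
  proof -
    have le: "ereal ((norm (x (Suc j) - (x j - \<eta> *\<^sub>R g j)))\<^sup>2 / 2) + ereal \<eta> * r (x (Suc j))
       \<le> ereal ((norm (z0 - (x j - \<eta> *\<^sub>R g j)))\<^sup>2 / 2) + ereal \<eta> * r z0"
      using iter[of j] unfolding is_prox_def by blast
    have "r (x (Suc j)) \<noteq> \<infinity>"
    proof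
      assume h: "r (x (Suc j)) = \<infinity>"
      have "ereal \<eta> * r (x (Suc j)) = \<infinity>" using h eta_pos by simp
      with le show False using z0 rnm[of z0] eta_pos by (cases "r z0") auto
    qed
    thus ?thesis using rnm[of "x (Suc j)"] unfolding R_def by (cases "r (x (Suc j))") auto
  qed
  have rstar: "r xstar = ereal (R xstar)"
  proof -
    have "F xstar \<le> F z0" by (rule xstar_min)
    hence "r xstar \<noteq> \<infinity>" using z0 rnm[of z0] unfolding F_def by (cases "r z0"; cases "r xstar") auto
    thus ?thesis using rnm[of xstar] unfolding R_def by (cases "r xstar") auto
  qed
  define Fs where "Fs = f xstar + R xstar"
  define FF where "FF = (\<lambda>j. f (x j) + R (x j) - Fs)"
  have FkFF: "Fk j = FF j" if j1: "1 \<le> j" for j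
  proof -
    obtain j' where j': "j = Suc j'" using j1 by (cases j) auto
    show ?thesis unfolding Fk_def F_def FF_def Fs_def j' rfin rstar by simp
  qed
  have xd: "x (Suc j) = x j + \<eta> *\<^sub>R d j" for j using eta_pos by (simp add: d_def)
  have ebound: "norm (G (x j) - g j) \<le> \<eta> * L * (\<Sum>l\<in>{j-K..<j}. norm (d l))" if jK: "K \<le> j" for j
  proof -
    define S where "S = (\<Sum>l\<in>{j-K..<j}. norm (d l))"
    have xdiff: "norm (x j - x t) \<le> \<eta> * S" if t: "j - K \<le> t" "t \<le> j" for t
    proof -
      have "x j - x t = (\<Sum>l\<in>{t..<j}. x (Suc l) - x l)" using sum_Suc_diff'[OF t(2), of x] by simp
      also have "\<dots> = (\<Sum>l\<in>{t..<j}. \<eta> *\<^sub>R d l)" using xd by simp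
      finally have "norm (x j - x t) \<le> (\<Sum>l\<in>{t..<j}. norm (\<eta> *\<^sub>R d l))" using norm_sum by metis
      also have "\<dots> = \<eta> * (\<Sum>l\<in>{t..<j}. norm (d l))" using eta_pos by (simp add: sum_distrib_left)
      also have "\<dots> \<le> \<eta> * S" unfolding S_def using t eta_pos by (intro mult_left_mono sum_mono2) auto
      finally show ?thesis .
    qed
    have "G (x j) - g j = (1 / real m) *\<^sub>R (\<Sum>i\<in>{1..m}. grad i (x j) - grad i (x (\<tau> i j)))"
      by (simp add: G_def g_def sum_subtractf scaleR_diff_right)
    hence "norm (G (x j) - g j) = (1 / real m) * norm (\<Sum>i\<in>{1..m}. grad i (x j) - grad i (x (\<tau> i j)))"
      using m0 by simp
    also have "\<dots> \<le> (1 / real m) * (\<Sum>i\<in>{1..m}. Li i * (\<eta> * S))"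
    proof (intro mult_left_mono order_trans[OF norm_sum sum_mono])
      fix i assume i: "i \<in> {1..m}"
      have "norm (grad i (x j) - grad i (x (\<tau> i j))) \<le> Li i * norm (x j - x (\<tau> i j))" by (rule lipschitz[OF i])
      also have "\<dots> \<le> Li i * (\<eta> * S)" using xdiff tau_bounds[OF i, of j] Li_nonneg[OF i] by (intro mult_left_mono) auto
      finally show "norm (grad i (x j) - grad i (x (\<tau> i j))) \<le> Li i * (\<eta> * S)" .
    qed simp
    also have "\<dots> = \<eta> * L * S" by (simp add: L_def sum_distrib_right sum_distrib_left[symmetric] algebra_simps)
    finally show ?thesis unfolding S_def .
  qed
  have stepA: "FF (Suc j) \<le> FF j - \<eta> * (norm (d j))\<^sup>2 + \<eta> * ((G (x j) - g j) \<bullet> d j) + L * \<eta>\<^sup>2 / 2 * (norm (d j))\<^sup>2"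
    if j1: "1 \<le> j" for j
  proof -
    obtain j' where j': "j = Suc j'" using j1 by (cases j) auto
    have rj: "r (x j) = ereal (R (x j))" using rfin j' by simp
    have P: "\<eta> * (R (x j) - R (x (Suc j))) + (x (Suc j) - (x j - \<eta> *\<^sub>R g j)) \<bullet> (x j - x (Suc j)) \<ge> 0"
      by (rule prox_ineq[OF r_pcc iter eta_pos rfin rj])
    have e1: "x (Suc j) - (x j - \<eta> *\<^sub>R g j) = \<eta> *\<^sub>R (d j + g j)" using xd by (simp add: algebra_simps)
    have e2: "x j - x (Suc j) = - (\<eta> *\<^sub>R d j)" using xd by simp
    have "0 \<le> \<eta> * (R (x j) - R (x (Suc j)) - \<eta> * ((d j + g j) \<bullet> d j))"
      using P unfolding e1 e2 by (simp add: algebra_simps)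
    hence PR: "R (x (Suc j)) \<le> R (x j) - \<eta> * ((d j + g j) \<bullet> d j)" using eta_pos by (simp add: zero_le_mult_iff)
    have D: "f (x (Suc j)) \<le> f (x j) + G (x j) \<bullet> (\<eta> *\<^sub>R d j) + L / 2 * (norm (\<eta> *\<^sub>R d j))\<^sup>2"
      using desc[of "x (Suc j)" "x j"] xd by simp
    have i1: "(d j + g j) \<bullet> d j = (norm (d j))\<^sup>2 + g j \<bullet> d j" by (simp add: inner_add_left power2_norm_eq_inner)
    have i2: "(G (x j) - g j) \<bullet> d j = G (x j) \<bullet> d j - g j \<bullet> d j" by (simp add: inner_diff_left)
    have i3: "G (x j) \<bullet> (\<eta> *\<^sub>R d j) = \<eta> * (G (x j) \<bullet> d j)" by simp
    have i4: "L / 2 * (norm (\<eta> *\<^sub>R d j))\<^sup>2 = L * \<eta>\<^sup>2 / 2 * (norm (d j))\<^sup>2"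
      using eta_pos by (simp add: power_mult_distrib)
    show ?thesis using PR D unfolding FF_def i1 i2 i3 i4 by (simp add: algebra_simps)
  qed
  have stepB: "FF (Suc j) \<le> ((G (x j) - g j) - d j) \<bullet> ((x j - xstar) + \<eta> *\<^sub>R d j)
      - \<mu> / 2 * (norm (x j - xstar))\<^sup>2 + L * \<eta>\<^sup>2 / 2 * (norm (d j))\<^sup>2"
    if j1: "1 \<le> j" for j
  proof -
    define u where "u = x j - xstar"
    have P: "\<eta> * (R xstar - R (x (Suc j))) + (x (Suc j) - (x j - \<eta> *\<^sub>R g j)) \<bullet> (xstar - x (Suc j)) \<ge> 0"
      by (rule prox_ineq[OF r_pcc iter eta_pos rfin rstar])
    have e1: "x (Suc j) - (x j - \<eta> *\<^sub>R g j) = \<eta> *\<^sub>R (d j + g j)" using xd by (simp add: algebra_simps)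
    have e2: "xstar - x (Suc j) = - (u + \<eta> *\<^sub>R d j)" using xd unfolding u_def by simp
    have "0 \<le> \<eta> * (R xstar - R (x (Suc j)) - ((d j + g j) \<bullet> (u + \<eta> *\<^sub>R d j)))"
      using P unfolding e1 e2 by (simp add: algebra_simps)
    hence PR: "R (x (Suc j)) \<le> R xstar - (d j + g j) \<bullet> (u + \<eta> *\<^sub>R d j)" using eta_pos by (simp add: zero_le_mult_iff)
    have D: "f (x (Suc j)) \<le> f (x j) + G (x j) \<bullet> (\<eta> *\<^sub>R d j) + L / 2 * (norm (\<eta> *\<^sub>R d j))\<^sup>2"
      using desc[of "x (Suc j)" "x j"] xd by simp
    have SC: "f (x j) - G (x j) \<bullet> u + \<mu> / 2 * (norm u)\<^sup>2 \<le> f xstar"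
      using scvx[where y=xstar and z="x j"] unfolding u_def by (simp add: norm_minus_commute inner_diff_right)
    have i4: "L / 2 * (norm (\<eta> *\<^sub>R d j))\<^sup>2 = L * \<eta>\<^sup>2 / 2 * (norm (d j))\<^sup>2"
      using eta_pos by (simp add: power_mult_distrib)
    have i5: "((G (x j) - g j) - d j) \<bullet> (u + \<eta> *\<^sub>R d j)
       = G (x j) \<bullet> u + G (x j) \<bullet> (\<eta> *\<^sub>R d j) - (d j + g j) \<bullet> (u + \<eta> *\<^sub>R d j)"
      by (simp add: inner_diff_left inner_add_left inner_add_right algebra_simps)
    show ?thesis using PR D SC unfolding FF_def Fs_def i4 u_def[symmetric] i5 by simp
  qed
  define W where "W = (\<lambda>p q. \<Sum>l\<in>{p..<q}. (norm (d l))\<^sup>2)"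
  have W0: "W p q \<ge> 0" for p q unfolding W_def by (intro sum_nonneg) auto
  have stepI: "(1 + \<eta> * \<mu> / 8) * FF (Suc j) \<le> FF j + \<eta>\<^sup>2 * L * W (j - K) j"
    if j1: "1 \<le> j" and jK: "K \<le> j" for j
  proof -
    define S where "S = (\<Sum>l\<in>{j-K..<j}. norm (d l))"
    have c: "(1 + \<eta> * \<mu> / 8) * FF (Suc j) \<le> FF j + \<eta> * (norm (G (x j) - g j))\<^sup>2"
      by (rule combine[OF stepA[OF j1] stepB[OF j1] eta_pos mu_pos etaL1 etamu])
    have n1: "(norm (G (x j) - g j))\<^sup>2 \<le> (\<eta> * L * S)\<^sup>2"
      by (rule power_mono[OF ebound[OF jK, folded S_def]]) simp
    have n2: "S\<^sup>2 \<le> real K * W (j - K) j"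
      using cs_sum[of "{j-K..<j}" "\<lambda>l. norm (d l)"] jK unfolding S_def W_def by simp
    have "\<eta> * (norm (G (x j) - g j))\<^sup>2 \<le> \<eta> * (\<eta> * L * S)\<^sup>2"
      using n1 eta_pos by (simp add: mult_left_mono)
    also have "\<dots> = (\<eta> ^ 3 * L\<^sup>2) * S\<^sup>2" by (simp add: power_mult_distrib power2_eq_square power3_eq_cube)
    also have "\<dots> \<le> (\<eta> ^ 3 * L\<^sup>2) * (real K * W (j - K) j)"
      using n2 eta_pos by (intro mult_left_mono) auto
    also have "\<dots> = (\<eta>\<^sup>2 * L * W (j - K) j) * (\<eta> * L * real K)"
      by (simp add: power2_eq_square power3_eq_cube)
    also have "\<dots> \<le> (\<eta>\<^sup>2 * L * W (j - K) j) * 1"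
      using etaLK L0 W0[of "j - K" j] by (intro mult_left_mono) auto
    finally show ?thesis using c by simp
  qed
  have stepA': "\<eta> / 2 * (norm (d j))\<^sup>2 - \<eta>\<^sup>2 * L / 2 * W (j - K) j \<le> FF j - FF (Suc j)"
    if j1: "1 \<le> j" and jK: "K \<le> j" for j
  proof -
    define S where "S = (\<Sum>l\<in>{j-K..<j}. norm (d l))"
    define Q where "Q = W (j - K) j"
    define Dj where "Dj = (norm (d j))\<^sup>2"
    have A: "FF (Suc j) \<le> FF j - \<eta> * Dj + \<eta> * ((G (x j) - g j) \<bullet> d j) + L * \<eta>\<^sup>2 / 2 * Dj"
      using stepA[OF j1] unfolding Dj_def .
    have "(G (x j) - g j) \<bullet> d j \<le> norm (G (x j) - g j) * norm (d j)" by (rule norm_cauchy_schwarz)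
    also have "\<dots> \<le> (\<eta> * L * S) * norm (d j)"
      by (rule mult_right_mono[OF ebound[OF jK, folded S_def]]) simp
    also have "(\<eta> * L * S) * norm (d j) = \<eta> * L * (S * norm (d j))" by (simp only: mult.assoc)
    finally have f1: "(G (x j) - g j) \<bullet> d j \<le> \<eta> * L * (S * norm (d j))" .
    have "S * norm (d j) = (\<Sum>l\<in>{j-K..<j}. norm (d l) * norm (d j))" unfolding S_def by (simp add: sum_distrib_right)
    also have "\<dots> \<le> (\<Sum>l\<in>{j-K..<j}. ((norm (d l))\<^sup>2 + (norm (d j))\<^sup>2) / 2)"
      by (intro sum_mono mul_le_half)
    also have "\<dots> = (Q + real K * Dj) / 2"
      unfolding Q_def W_def Dj_def using jK by (simp add: sum.distrib sum_divide_distrib[symmetric])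
    finally have f2: "S * norm (d j) \<le> (Q + real K * Dj) / 2" .
    have f3: "\<eta> * ((G (x j) - g j) \<bullet> d j) \<le> \<eta> * (\<eta> * L * ((Q + real K * Dj) / 2))"
    proof -
      have etaL0: "0 \<le> \<eta> * L" using eta_pos L0 by simp
      have "\<eta> * L * (S * norm (d j)) \<le> \<eta> * L * ((Q + real K * Dj) / 2)"
        by (rule mult_left_mono[OF f2 etaL0])
      hence "(G (x j) - g j) \<bullet> d j \<le> \<eta> * L * ((Q + real K * Dj) / 2)" using f1 by linarith
      from mult_left_mono[OF this, of \<eta>] eta_pos show ?thesis by (simp only: less_imp_le)
    qed
    have D0: "Dj \<ge> 0" unfolding Dj_def by simp
    have f4n: "0 \<le> \<eta> * Dj / 2" using eta_pos D0 by simp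
    have f4: "\<eta> * L * (real K + 1) * (\<eta> * Dj / 2) \<le> 1 * (\<eta> * Dj / 2)"
      by (rule mult_right_mono[OF eta_le f4n])
    have e: "\<eta> * (\<eta> * L * ((Q + real K * Dj) / 2)) + L * \<eta>\<^sup>2 / 2 * Dj
       = \<eta>\<^sup>2 * L / 2 * Q + \<eta> * L * (real K + 1) * (\<eta> * Dj / 2)"
      by (simp add: power2_eq_square field_simps)
    show ?thesis using A f3 f4 e unfolding Q_def[symmetric] Dj_def[symmetric] by linarith
  qed
  have window: "\<eta> / 2 * W p q \<le> FF p - FF q + \<eta>\<^sup>2 * L * real K / 2 * W (p - K) q"
    if p1: "1 \<le> p" and pK: "K \<le> p" and pq: "p \<le> q" for p q
  proof -
    have tel: "(\<Sum>j\<in>{p..<q}. FF j - FF (Suc j)) = FF p - FF q"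
      using sum_Suc_diff'[OF pq, of FF] by (simp add: sum_subtractf)
    have "(\<Sum>j\<in>{p..<q}. \<eta> / 2 * (norm (d j))\<^sup>2 - \<eta>\<^sup>2 * L / 2 * W (j - K) j) \<le> (\<Sum>j\<in>{p..<q}. FF j - FF (Suc j))"
      by (rule sum_mono) (rule stepA', use p1 pK in auto)
    moreover have "(\<Sum>j\<in>{p..<q}. \<eta> / 2 * (norm (d j))\<^sup>2 - \<eta>\<^sup>2 * L / 2 * W (j - K) j)
        = \<eta> / 2 * W p q - \<eta>\<^sup>2 * L / 2 * (\<Sum>j\<in>{p..<q}. W (j - K) j)"
      unfolding W_def by (simp add: sum_subtractf sum_distrib_left)
    moreover have "(\<Sum>j\<in>{p..<q}. W (j - K) j) \<le> real K * W (p - K) q"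
      unfolding W_def by (rule dsum[OF _ pK]) simp
    moreover have "\<eta>\<^sup>2 * L / 2 * (\<Sum>j\<in>{p..<q}. W (j - K) j) \<le> \<eta>\<^sup>2 * L / 2 * (real K * W (p - K) q)"
      using calculation(3) L0 by (intro mult_left_mono) auto
    ultimately show ?thesis using tel by (simp add: algebra_simps)
  qed
  have aK: "a * K + 1 \<le> k" using k_ge .
  have k1: "1 \<le> k" using aK by simp
  have iK: "i * K \<le> a * K" if "i \<le> a" for i using that by (rule mult_le_mono1)
  have kK: "K \<le> k"
  proof -
    have "K \<le> a * K" using a_ge by simp
    thus ?thesis using aK by linarith
  qed
  have ind: "\<eta>\<^sup>2 * L * W (k - K) k \<le> (\<Sum>i=1..n-1. \<epsilon> i * (FF (k - i * K) - FF k))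
      + \<eta>\<^sup>2 * L * (\<eta> * real K * L) ^ (n - 1) * W (k - n * K) k"
    if "1 \<le> n" "n \<le> a" for n
    using that
  proof (induction n)
    case 0
    then show ?case by simp
  next
    case (Suc n)
    show ?case
    proof (cases "n = 0")
      case True
      then show ?thesis by simp
    next
      case False
      hence n1: "1 \<le> n" by simp
      have na: "n \<le> a" using Suc.prems by simp
      have IH: "\<eta>\<^sup>2 * L * W (k - K) k \<le> (\<Sum>i=1..n-1. \<epsilon> i * (FF (k - i * K) - FF k))
        + \<eta>\<^sup>2 * L * (\<eta> * real K * L) ^ (n - 1) * W (k - n * K) k"
        using Suc.IH[OF n1 na] .
      define p where "p = k - n * K"
      have snK: "Suc n * K \<le> a * K" using Suc.prems by (intro mult_le_mono1) simp
      have p1: "1 \<le> p" and pK: "K \<le> p" and pk: "p \<le> k" and pK2: "p - K = k - Suc n * K"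
        using snK aK unfolding p_def by auto
      have win: "\<eta> / 2 * W p k \<le> FF p - FF k + \<eta>\<^sup>2 * L * real K / 2 * W (p - K) k"
        by (rule window[OF p1 pK pk])
      define c where "c = 2 * \<eta> * L * (\<eta> * real K * L) ^ (n - 1)"
      have c0: "c \<ge> 0" unfolding c_def using eta_pos L0 by simp
      have cwin: "c * (\<eta> / 2 * W p k) \<le> c * (FF p - FF k + \<eta>\<^sup>2 * L * real K / 2 * W (p - K) k)"
        by (rule mult_left_mono[OF win c0])
      have ce: "c = \<epsilon> n" unfolding c_def \<epsilon>_def ..
      have e1: "c * (\<eta> / 2 * W p k) = \<eta>\<^sup>2 * L * (\<eta> * real K * L) ^ (n - 1) * W p k"
        unfolding c_def by (simp add: power2_eq_square)
      have pw: "(\<eta> * real K * L) ^ (Suc n - 1) = (\<eta> * real K * L) ^ (n - 1) * (\<eta> * real K * L)"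
        using n1 by (simp add: power_Suc2[symmetric])
      have e2: "c * (FF p - FF k + \<eta>\<^sup>2 * L * real K / 2 * W (p - K) k)
          = c * (FF p - FF k) + \<eta>\<^sup>2 * L * (\<eta> * real K * L) ^ (Suc n - 1) * W (k - Suc n * K) k"
        unfolding c_def pw pK2 by (simp add: power2_eq_square algebra_simps)
      obtain n' where n': "n = Suc n'" using n1 by (cases n) auto
      have e3: "(\<Sum>i=1..Suc n-1. \<epsilon> i * (FF (k - i * K) - FF k))
          = (\<Sum>i=1..n-1. \<epsilon> i * (FF (k - i * K) - FF k)) + \<epsilon> n * (FF p - FF k)"
        unfolding n' p_def by simp
      have e4: "c * (FF p - FF k) = \<epsilon> n * (FF p - FF k)" using ce by simp
      show ?thesis using IH cwin e1 e2 e3 e4 unfolding p_def[symmetric] by linarith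
    qed
  qed
  have sI: "(1 + \<eta> * \<mu> / 8) * FF (Suc k) \<le> FF k + \<eta>\<^sup>2 * L * W (k - K) k"
    by (rule stepI[OF k1 kK])
  have fin: "(1 + \<eta> * \<mu> / 8) * FF (Suc k) \<le> FF k + (\<Sum>i=1..a-1. \<epsilon> i * (FF (k - i * K) - FF k))
      + \<eta>\<^sup>2 * L * (\<eta> * real K * L) ^ (a - 1) * W (k - a * K) k"
    using sI ind[of a] a_ge by simp
  have c1: "Fk (Suc k) = FF (Suc k)" by (rule FkFF) simp
  have c2: "Fk k = FF k" by (rule FkFF[OF k1])
  have c3: "(\<Sum>i=1..a-1. \<epsilon> i * Fk (k - i * K)) = (\<Sum>i=1..a-1. \<epsilon> i * FF (k - i * K))"
  proof (rule sum.cong[OF refl])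
    fix i assume "i \<in> {1..a-1}"
    hence "i \<le> a" by auto
    hence "i * K \<le> a * K" by (rule iK)
    hence "1 \<le> k - i * K" using aK by linarith
    thus "\<epsilon> i * Fk (k - i * K) = \<epsilon> i * FF (k - i * K)" using FkFF by simp
  qed
  have c4: "(\<Sum>j=k - a * K..k - 1. (norm (d j))\<^sup>2) = W (k - a * K) k"
  proof -
    have "{k - a * K..k - 1} = {k - a * K..<k}" using k1 by auto
    thus ?thesis unfolding W_def by simp
  qed
  have c5: "\<eta>\<^sup>2 * (real K * L / 2) * \<epsilon> (a - 1) = \<eta>\<^sup>2 * L * (\<eta> * real K * L) ^ (a - 1)"
  proof -
    obtain a' where a': "a = Suc (Suc a')" using a_ge by (metis add_2_eq_Suc le_Suc_ex)
    show ?thesis unfolding \<epsilon>_def a' by (simp add: power2_eq_square)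
  qed
  have c6: "(\<Sum>i=1..a-1. \<epsilon> i * (FF (k - i * K) - FF k))
      = (\<Sum>i=1..a-1. \<epsilon> i * FF (k - i * K)) - (\<Sum>i=1..a-1. \<epsilon> i) * FF k"
    by (simp add: right_diff_distrib sum_subtractf sum_distrib_right)
  show ?thesis unfolding c1 c2 c3 c4 c5 using fin c6 by (simp add: algebra_simps)
qed


end
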